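(* Let $U$ be a finite set and $\mathscr{S}$ a collection of subsets of $U$ of size at most $k$ that is closed under taking subsets. Suppose $\mathscr{C}$ and $\mathscr{C}'$ are $k$-set covers of $U$ (partitions of $U$ into members of $\mathscr{S}$), where $\mathscr{C}$ consists of $b$ sets of which $b_1$ are 1-element sets, and $\mathscr{C}'$ consists of $b'$ sets of which $b_1'$ are 1-element sets. Then there exists a $k$-set cover $\mathscr{C}''$ of $U$ (a partition of $U$ into members of $\mathscr{S}$) with $\min(b,b')$ sets and $\min(b_1,b_1')$ 1-element sets. *)

theory Defs
  imports Main "HOL-Library.Disjoint_Sets"
begin

definition set_cover :: "'a set set \<Rightarrow> 'a set \<Rightarrow> 'a set set \<Rightarrow> bool" where
  "set_cover S U C \<longleftrightarrow> partition_on U C \<and> C \<subseteq> S"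

definition singletons_of :: "'a set set \<Rightarrow> 'a set set" where
  "singletons_of C = {A \<in> C. card A = 1}"

end

theory Submission
  imports Defs
begin

lemma reduce:
  fixes U :: "'a set"
  assumes dc: "\<forall>A\<in>S. \<forall>B. B \<subseteq> A \<longrightarrow> B \<in> S"
    and fin: "finite U"
    and cC: "set_cover S U C" and cC': "set_cover S U C'"
    and BC': "B \<in> C'" and two: "2 \<le> card C'"
    and IH: "\<And>C1 C1'. set_cover S (U - B) C1 \<Longrightarrow> set_cover S (U - B) C1' \<Longrightarrow>
              card C1 + (card (singletons_of C1') - card (singletons_of C1)) \<le> card C' - 2 \<Longrightarrow>
              card C' - 2 \<le> card C1' \<Longrightarrow>
              \<exists>Q. set_cover S (U - B) Q \<and> card Q = card C' - 2 \<and> card (singletons_of Q) = card (singletons_of C1')"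
    and arith: "\<And>c1 s1. c1 + card {A\<in>C. A \<subseteq> B} \<le> card C \<Longrightarrow>
                   card (singletons_of C) \<le> s1 + card {A\<in>C. A \<subseteq> B} \<Longrightarrow>
                   c1 + (card (singletons_of C') - (if card B = 1 then 1 else 0) - s1) \<le> card C' - 2"
  shows "\<exists>Q. set_cover S U Q \<and> card Q = card C' - 1 \<and> card (singletons_of Q) = card (singletons_of C')"
proof -
  have pC: "partition_on U C" and SC: "C \<subseteq> S" using cC by (auto simp: set_cover_def)
  have pC': "partition_on U C'" and SC': "C' \<subseteq> S" using cC' by (auto simp: set_cover_def)
  have finC: "finite C" using finite_elements[OF fin pC] .
  have finC': "finite C'" using finite_elements[OF fin pC'] .
  have BU: "B \<subseteq> U" using pC' BC' by (auto simp: partition_on_def)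
  have Bne: "B \<noteq> {}" using pC' BC' by (auto simp: partition_on_def)
  define C1 where "C1 = ((\<inter>) (U - B)) ` C - {{}}"
  have pC1: "partition_on (U - B) C1"
    using partition_on_restrict[OF pC, of "U - B"] unfolding C1_def by (simp add: Int_absorb2 Diff_subset)
  have SC1: "C1 \<subseteq> S"
    unfolding C1_def using SC dc by blast
  have dis: "disjnt B (\<Union>(C' - {B}))"
    using pC' BC' unfolding partition_on_def disjoint_def disjnt_def by blast
  have ins: "insert B (C' - {B}) = C'" using BC' by blast
  have pC1': "partition_on (U - B) (C' - {B})"
    using partition_on_insert[OF dis, of U] pC' ins by simp
  define K where "K = {A\<in>C. A \<subseteq> B}"
  have KC: "K \<subseteq> C" unfolding K_def by blast
  have finK: "finite K" using finC KC finite_subset by blast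
  have c1: "card C1 + card K \<le> card C"
  proof -
    have "C1 \<subseteq> ((\<inter>) (U - B)) ` (C - K)"
      unfolding C1_def K_def by blast
    hence "card C1 \<le> card (((\<inter>) (U - B)) ` (C - K))"
      using finC by (intro card_mono) auto
    also have "\<dots> \<le> card (C - K)" using finC by (intro card_image_le) auto
    also have "\<dots> = card C - card K" using KC finK by (simp add: card_Diff_subset)
    finally show ?thesis using card_mono[OF finC KC] by linarith
  qed
  have s1: "card (singletons_of C) \<le> card (singletons_of C1) + card K"
  proof -
    have sub: "singletons_of C - K \<subseteq> singletons_of C1"
    proof
      fix A assume A: "A \<in> singletons_of C - K"
      then obtain x where Ax: "A = {x}" and AC: "A \<in> C" and nB: "\<not> A \<subseteq> B"
        unfolding singletons_of_def K_def by (auto simp: card_1_singleton_iff)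
      have "x \<in> U" using pC AC Ax by (auto simp: partition_on_def)
      hence "(U - B) \<inter> A = A" using Ax nB by auto
      thus "A \<in> singletons_of C1" using A AC Ax unfolding C1_def singletons_of_def by force
    qed
    have finS1: "finite (singletons_of C1)"
      using finite_elements[OF _ pC1] fin unfolding singletons_of_def by auto
    have "card (singletons_of C) \<le> card ((singletons_of C - K) \<union> K)"
      using finC finK by (intro card_mono) (auto simp: singletons_of_def)
    also have "\<dots> \<le> card (singletons_of C - K) + card K" by (rule card_Un_le)
    also have "\<dots> \<le> card (singletons_of C1) + card K" using card_mono[OF finS1 sub] by simp
    finally show ?thesis .
  qed
  have cardC1': "card (C' - {B}) = card C' - 1" using finC' BC' by simp
  have sC1': "singletons_of (C' - {B}) = singletons_of C' - {B}"
    unfolding singletons_of_def by auto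
  have finSC': "finite (singletons_of C')" using finC' unfolding singletons_of_def by auto
  have cardsC1': "card (singletons_of (C' - {B})) = card (singletons_of C') - (if card B = 1 then 1 else 0)"
    unfolding sC1' using finSC' BC' by (auto simp: singletons_of_def)
  have cond: "card C1 + (card (singletons_of (C' - {B})) - card (singletons_of C1)) \<le> card C' - 2"
    unfolding cardsC1' using arith[OF _ ] c1 s1 unfolding K_def by blast
  have scC1: "set_cover S (U - B) C1" using pC1 SC1 by (simp add: set_cover_def)
  have scC1': "set_cover S (U - B) (C' - {B})" using pC1' SC' by (auto simp: set_cover_def)
  have le: "card C' - 2 \<le> card (C' - {B})" using cardC1' by simp
  obtain Q where cQ: "set_cover S (U - B) Q" and cardQ: "card Q = card C' - 2"
    and sQ: "card (singletons_of Q) = card (singletons_of (C' - {B}))"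
    using IH[OF scC1 scC1' cond le] by blast
  have pQ: "partition_on (U - B) Q" and SQ: "Q \<subseteq> S" using cQ by (auto simp: set_cover_def)
  have finQ: "finite Q" using finite_elements[OF _ pQ] fin by auto
  have UQ: "\<Union>Q = U - B" using pQ by (auto simp: partition_on_def)
  have BQ: "B \<notin> Q" using UQ Bne by blast
  have disQ: "disjnt B (\<Union>Q)" using UQ by (auto simp: disjnt_def)
  have pnew: "partition_on U (insert B Q)"
    using partition_on_insert[OF disQ, of U] pQ BU Bne by simp
  have Snew: "insert B Q \<subseteq> S" using SQ SC' BC' by blast
  have cardnew: "card (insert B Q) = card C' - 1" using finQ BQ cardQ two by simp
  have finSQ: "finite (singletons_of Q)" using finQ unfolding singletons_of_def by auto
  have snew: "card (singletons_of (insert B Q)) = card (singletons_of C')"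
  proof (cases "card B = 1")
    case True
    have e: "singletons_of (insert B Q) = insert B (singletons_of Q)"
      using True unfolding singletons_of_def by auto
    have "B \<notin> singletons_of Q" using BQ unfolding singletons_of_def by auto
    moreover have "B \<in> singletons_of C'" using BC' True unfolding singletons_of_def by auto
    hence "card (singletons_of C') \<ge> 1" using finSC' by (metis One_nat_def Suc_leI card_gt_0_iff empty_iff)
    ultimately show ?thesis using e finSQ sQ cardsC1' True by simp
  next
    case False
    have e: "singletons_of (insert B Q) = singletons_of Q"
      using False unfolding singletons_of_def by auto
    show ?thesis using e sQ cardsC1' False by simp
  qed
  show ?thesis using pnew Snew cardnew snew by (auto simp: set_cover_def)
qed


lemma step:
  fixes U :: "'a set"
  assumes dc: "\<forall>A\<in>S. \<forall>B. B \<subseteq> A \<longrightarrow> B \<in> S"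
    and fin: "finite U"
    and cC: "set_cover S U C" and cC': "set_cover S U C'"
    and IH: "\<And>U' C1 C1' t. U' \<subset> U \<Longrightarrow> set_cover S U' C1 \<Longrightarrow> set_cover S U' C1' \<Longrightarrow>
              card C1 + (card (singletons_of C1') - card (singletons_of C1)) \<le> t \<Longrightarrow>
              t \<le> card C1' \<Longrightarrow>
              \<exists>Q. set_cover S U' Q \<and> card Q = t \<and> card (singletons_of Q) = card (singletons_of C1')"
    and h: "card C + (card (singletons_of C') - card (singletons_of C)) < card C'"
  shows "\<exists>Q. set_cover S U Q \<and> card Q = card C' - 1 \<and> card (singletons_of Q) = card (singletons_of C')"
proof -
  have pC: "partition_on U C" using cC by (auto simp: set_cover_def)
  have pC': "partition_on U C'" using cC' by (auto simp: set_cover_def)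
  have finC: "finite C" using finite_elements[OF fin pC] .
  have finC': "finite C'" using finite_elements[OF fin pC'] .
  have IHB: "\<And>B C1 C1'. B \<in> C' \<Longrightarrow> set_cover S (U - B) C1 \<Longrightarrow> set_cover S (U - B) C1' \<Longrightarrow>
              card C1 + (card (singletons_of C1') - card (singletons_of C1)) \<le> card C' - 2 \<Longrightarrow>
              card C' - 2 \<le> card C1' \<Longrightarrow>
              \<exists>Q. set_cover S (U - B) Q \<and> card Q = card C' - 2 \<and> card (singletons_of Q) = card (singletons_of C1')"
  proof -
    fix B C1 C1' assume B: "B \<in> C'" and a: "set_cover S (U - B) C1" "set_cover S (U - B) C1'"
      "card C1 + (card (singletons_of C1') - card (singletons_of C1)) \<le> card C' - 2"
      "card C' - 2 \<le> card C1'"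
    have "B \<subseteq> U" "B \<noteq> {}" using pC' B by (auto simp: partition_on_def)
    hence "U - B \<subset> U" by blast
    thus "\<exists>Q. set_cover S (U - B) Q \<and> card Q = card C' - 2 \<and> card (singletons_of Q) = card (singletons_of C1')"
      using IH a by blast
  qed
  define b where "b = card C"
  define b1 where "b1 = card (singletons_of C)"
  define b' where "b' = card C'"
  define b1' where "b1' = card (singletons_of C')"
  have h': "b + (b1' - b1) < b'" using h unfolding b_def b1_def b'_def b1'_def .
  show ?thesis
  proof (cases "b + (b1' - b1) + 2 \<le> b'")
    case True
    have "C' \<noteq> {}" using True unfolding b'_def by auto
    then obtain B where B: "B \<in> C'" by blast
    show ?thesis
    proof (rule reduce[OF dc fin cC cC' B])
      show "2 \<le> card C'" using True unfolding b'_def by simp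
      show "\<And>C1 C1'. set_cover S (U - B) C1 \<Longrightarrow> set_cover S (U - B) C1' \<Longrightarrow>
              card C1 + (card (singletons_of C1') - card (singletons_of C1)) \<le> card C' - 2 \<Longrightarrow>
              card C' - 2 \<le> card C1' \<Longrightarrow>
              \<exists>Q. set_cover S (U - B) Q \<and> card Q = card C' - 2 \<and> card (singletons_of Q) = card (singletons_of C1')"
        using IHB[OF B] by blast
      fix c1 s1
      assume "c1 + card {A\<in>C. A \<subseteq> B} \<le> card C" "card (singletons_of C) \<le> s1 + card {A\<in>C. A \<subseteq> B}"
      thus "c1 + (card (singletons_of C') - (if card B = 1 then 1 else 0) - s1) \<le> card C' - 2"
        using True unfolding b_def b1_def b'_def b1'_def by (cases "card B = 1") auto
    qed
  next
    case False
    hence tight: "b + (b1' - b1) + 1 = b'" using h' by linarith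
    consider (gt) "b1 < b1'" | (lt) "b1' < b1" | (eq) "b1 = b1'" by linarith
    thus ?thesis
    proof cases
      case eq
      show ?thesis using cC tight eq unfolding b_def b1_def b'_def b1'_def by auto
    next
      case gt
      have "singletons_of C' \<noteq> {}" using gt unfolding b1'_def by auto
      then obtain B where Bs: "B \<in> singletons_of C'" by blast
      hence B: "B \<in> C'" and B1: "card B = 1" unfolding singletons_of_def by auto
      show ?thesis
      proof (rule reduce[OF dc fin cC cC' B])
        show "2 \<le> card C'" using tight gt unfolding b'_def by simp
        show "\<And>C1 C1'. set_cover S (U - B) C1 \<Longrightarrow> set_cover S (U - B) C1' \<Longrightarrow>
              card C1 + (card (singletons_of C1') - card (singletons_of C1)) \<le> card C' - 2 \<Longrightarrow>
              card C' - 2 \<le> card C1' \<Longrightarrow>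
              \<exists>Q. set_cover S (U - B) Q \<and> card Q = card C' - 2 \<and> card (singletons_of Q) = card (singletons_of C1')"
          using IHB[OF B] by blast
        fix c1 s1
        assume "c1 + card {A\<in>C. A \<subseteq> B} \<le> card C" "card (singletons_of C) \<le> s1 + card {A\<in>C. A \<subseteq> B}"
        thus "c1 + (card (singletons_of C') - (if card B = 1 then 1 else 0) - s1) \<le> card C' - 2"
          using tight gt B1 unfolding b_def b1_def b'_def b1'_def by auto
      qed
    next
      case lt
      have "singletons_of C \<noteq> {}" using lt unfolding b1_def by auto
      then obtain A where As: "A \<in> singletons_of C" by blast
      then obtain x where Ax: "A = {x}" and AC: "A \<in> C"
        unfolding singletons_of_def by (auto simp: card_1_singleton_iff)
      have xU: "x \<in> U" using pC AC Ax by (auto simp: partition_on_def)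
      then obtain B where B: "B \<in> C'" and xB: "x \<in> B" using pC' by (auto simp: partition_on_def)
      have finK: "finite {A\<in>C. A \<subseteq> B}" using finC by auto
      have "A \<in> {A\<in>C. A \<subseteq> B}" using AC Ax xB by auto
      hence k1: "1 \<le> card {A\<in>C. A \<subseteq> B}" using finK
        by (metis One_nat_def Suc_leI card_gt_0_iff empty_iff)
      show ?thesis
      proof (rule reduce[OF dc fin cC cC' B])
        show "2 \<le> card C'" using tight lt k1 card_mono[OF finC, of "{A\<in>C. A \<subseteq> B}"]
          unfolding b_def b'_def by auto
        show "\<And>C1 C1'. set_cover S (U - B) C1 \<Longrightarrow> set_cover S (U - B) C1' \<Longrightarrow>
              card C1 + (card (singletons_of C1') - card (singletons_of C1)) \<le> card C' - 2 \<Longrightarrow>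
              card C' - 2 \<le> card C1' \<Longrightarrow>
              \<exists>Q. set_cover S (U - B) Q \<and> card Q = card C' - 2 \<and> card (singletons_of Q) = card (singletons_of C1')"
          using IHB[OF B] by blast
        fix c1 s1
        assume "c1 + card {A\<in>C. A \<subseteq> B} \<le> card C" "card (singletons_of C) \<le> s1 + card {A\<in>C. A \<subseteq> B}"
        thus "c1 + (card (singletons_of C') - (if card B = 1 then 1 else 0) - s1) \<le> card C' - 2"
          using tight lt k1 unfolding b_def b1_def b'_def b1'_def by (cases "card B = 1") auto
      qed
    qed
  qed
qed

lemma h6:
  fixes U :: "'a set"
  assumes dc: "\<forall>A\<in>S. \<forall>B. B \<subseteq> A \<longrightarrow> B \<in> S"
    and fin: "finite U"
  shows "\<forall>C C' t. set_cover S U C \<longrightarrow> set_cover S U C' \<longrightarrow>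
           card C + (card (singletons_of C') - card (singletons_of C)) \<le> t \<longrightarrow> t \<le> card C' \<longrightarrow>
           (\<exists>Q. set_cover S U Q \<and> card Q = t \<and> card (singletons_of Q) = card (singletons_of C'))"
  using fin
proof (induction U rule: finite_psubset_induct)
  case (psubset U)
  have IH: "\<And>U' C1 C1' t. U' \<subset> U \<Longrightarrow> set_cover S U' C1 \<Longrightarrow> set_cover S U' C1' \<Longrightarrow>
              card C1 + (card (singletons_of C1') - card (singletons_of C1)) \<le> t \<Longrightarrow>
              t \<le> card C1' \<Longrightarrow>
              \<exists>Q. set_cover S U' Q \<and> card Q = t \<and> card (singletons_of Q) = card (singletons_of C1')"
    using psubset.IH by blast
  show ?case
  proof (intro allI impI)
    fix C C' t
    assume cC: "set_cover S U C"
    have main: "\<And>C'. card C' - t = n \<Longrightarrow> set_cover S U C' \<Longrightarrow>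
           card C + (card (singletons_of C') - card (singletons_of C)) \<le> t \<Longrightarrow> t \<le> card C' \<Longrightarrow>
           (\<exists>Q. set_cover S U Q \<and> card Q = t \<and> card (singletons_of Q) = card (singletons_of C'))" for n
    proof (induction n)
      case 0
      thus ?case by (intro exI[of _ C']) auto
    next
      case (Suc n)
      have lt: "card C + (card (singletons_of C') - card (singletons_of C)) < card C'"
        using Suc.prems by linarith
      obtain C'' where c'': "set_cover S U C''" and cc: "card C'' = card C' - 1"
        and sc: "card (singletons_of C'') = card (singletons_of C')"
      proof -
        have "\<exists>Q. set_cover S U Q \<and> card Q = card C' - 1 \<and> card (singletons_of Q) = card (singletons_of C')"
          apply (rule step[OF dc psubset.hyps cC Suc.prems(2)])
           apply (rule IH; assumption)
          apply (rule lt)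
          done
        thus ?thesis using that by blast
      qed
      have "\<exists>Q. set_cover S U Q \<and> card Q = t \<and> card (singletons_of Q) = card (singletons_of C'')"
        using Suc.IH[OF _ c''] Suc.prems cc sc by auto
      thus ?case using sc by simp
    qed
    assume "set_cover S U C'" "card C + (card (singletons_of C') - card (singletons_of C)) \<le> t" "t \<le> card C'"
    thus "\<exists>Q. set_cover S U Q \<and> card Q = t \<and> card (singletons_of Q) = card (singletons_of C')"
      using main by blast
  qed
qed

theorem lemma2:
  fixes U :: "'a set" and S :: "'a set set" and k :: nat
    and C C' :: "'a set set" and b b1 b' b1' :: nat
  assumes "finite U"
    and "\<forall>A\<in>S. A \<subseteq> U \<and> card A \<le> k"
    and "\<forall>A\<in>S. \<forall>B. B \<subseteq> A \<longrightarrow> B \<in> S"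
    and "set_cover S U C" and "card C = b" and "card (singletons_of C) = b1"
    and "set_cover S U C'" and "card C' = b'" and "card (singletons_of C') = b1'"
  shows "\<exists>C''. set_cover S U C'' \<and> card C'' = min b b'
               \<and> card (singletons_of C'') = min b1 b1'"
proof -
  note H = h6[OF assms(3) assms(1)]
  consider "b \<le> b'" "b1' \<le> b1" | "b' \<le> b" "b1 \<le> b1'" | "b \<le> b'" "b1 \<le> b1'" | "b' \<le> b" "b1' \<le> b1"
    by linarith
  thus ?thesis
  proof cases
    case 1
    thus ?thesis using H assms(4-9) by (auto simp: min_def) 
  next
    case 2
    thus ?thesis using H assms(4-9) by (auto simp: min_def)
  next
    case 3
    thus ?thesis using assms(4-9) by (intro exI[of _ C]) (auto simp: min_def)
  next
    case 4
    thus ?thesis using assms(4-9) by (intro exI[of _ C']) (auto simp: min_def)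
  qed
qed

end
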